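(* Let $k$ be a positive integer. If $G$ and $G'$ are linear forests with the same number of vertices and the same number of edges, all of whose components have at least $k-1$ vertices, then $\mathcal{D}_k(G)=\mathcal{D}_k(G')$.
   Context: A linear forest is a disjoint union of paths. The $k$-deck $\mathcal{D}_k(G)$ is the multiset of isomorphism classes of the induced subgraphs of $G$ on $k$ vertices. *)

theory Defs
  imports "HOL-Library.Multiset"
begin

definition graph :: "'a set \<Rightarrow> 'a set set \<Rightarrow> bool" where
  "graph V E \<longleftrightarrow> finite V \<and> (\<forall>e\<in>E. e \<subseteq> V \<and> card e = 2)"

definition adj :: "'a set set \<Rightarrow> 'a \<Rightarrow> 'a \<Rightarrow> bool" where
  "adj E x y \<longleftrightarrow> {x, y} \<in> E"

definition component :: "'a set \<Rightarrow> 'a set set \<Rightarrow> 'a \<Rightarrow> 'a set" where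
  "component V E x = {y \<in> V. (adj E)\<^sup>*\<^sup>* x y}"

definition induced :: "'a set set \<Rightarrow> 'a set \<Rightarrow> 'a set set" where
  "induced E S = {e \<in> E. e \<subseteq> S}"

definition is_path :: "'a set \<Rightarrow> 'a set set \<Rightarrow> bool" where
  "is_path V E \<longleftrightarrow> (\<exists>xs. xs \<noteq> [] \<and> distinct xs \<and> set xs = V \<and>
      E = {{xs ! i, xs ! (i + 1)} | i. i + 1 < length xs})"

definition linear_forest :: "'a set \<Rightarrow> 'a set set \<Rightarrow> bool" where
  "linear_forest V E \<longleftrightarrow> graph V E \<and>
     (\<forall>x\<in>V. is_path (component V E x) (induced E (component V E x)))"

definition graph_iso :: "'a set \<Rightarrow> 'a set set \<Rightarrow> 'b set \<Rightarrow> 'b set set \<Rightarrow> bool" where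
  "graph_iso V E W F \<longleftrightarrow> (\<exists>f. bij_betw f V W \<and>
     (\<forall>x\<in>V. \<forall>y\<in>V. {x, y} \<in> E \<longleftrightarrow> {f x, f y} \<in> F))"

text \<open>Isomorphism class of a finite graph, represented as the set of all isomorphic
  graphs on the canonical vertex set {0..<n}.\<close>
definition iso_class :: "'a set \<Rightarrow> 'a set set \<Rightarrow> (nat set \<times> nat set set) set" where
  "iso_class V E = {(W, F). W = {0..<card V} \<and> graph W F \<and> graph_iso V E W F}"

definition deck :: "nat \<Rightarrow> 'a set \<Rightarrow> 'a set set \<Rightarrow> (nat set \<times> nat set set) set multiset" where
  "deck k V E = image_mset (\<lambda>S. iso_class S (induced E S)) (mset_set {S. S \<subseteq> V \<and> card S = k})"

end

theory Submission
  imports Defs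
begin

lemma image_mset_mset_set_cong:
  assumes "\<And>x. x \<in> K \<Longrightarrow> f x = g x"
  shows "image_mset f (mset_set K) = image_mset g (mset_set K)"
proof (cases "finite K")
  case True then show ?thesis using assms by (intro image_mset_cong) auto
qed simp

lemma graph_iso_sym:
  assumes "graph_iso V E W F" shows "graph_iso W F V E"
proof -
  obtain f where f: "bij_betw f V W" "\<forall>x\<in>V. \<forall>y\<in>V. {x, y} \<in> E \<longleftrightarrow> {f x, f y} \<in> F"
    using assms unfolding graph_iso_def by blast
  let ?g = "inv_into V f"
  have "bij_betw ?g W V" using f(1) by (rule bij_betw_inv_into)
  moreover have "\<forall>x\<in>W. \<forall>y\<in>W. {x, y} \<in> F \<longleftrightarrow> {?g x, ?g y} \<in> E"
  proof (intro ballI)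
    fix x y assume "x \<in> W" "y \<in> W"
    then have "?g x \<in> V" "?g y \<in> V" "f (?g x) = x" "f (?g y) = y"
      using f(1) by (auto simp: bij_betw_def inv_into_into f_inv_into_f)
    then show "{x, y} \<in> F \<longleftrightarrow> {?g x, ?g y} \<in> E" using f(2) by metis
  qed
  ultimately show ?thesis unfolding graph_iso_def by blast
qed

lemma graph_iso_trans:
  assumes "graph_iso A EA B EB" "graph_iso B EB C EC" shows "graph_iso A EA C EC"
proof -
  obtain f where f: "bij_betw f A B" "\<forall>x\<in>A. \<forall>y\<in>A. {x, y} \<in> EA \<longleftrightarrow> {f x, f y} \<in> EB"
    using assms(1) unfolding graph_iso_def by blast
  obtain g where g: "bij_betw g B C" "\<forall>x\<in>B. \<forall>y\<in>B. {x, y} \<in> EB \<longleftrightarrow> {g x, g y} \<in> EC"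
    using assms(2) unfolding graph_iso_def by blast
  have "bij_betw (g \<circ> f) A C" using f(1) g(1) by (rule bij_betw_trans)
  moreover have "\<forall>x\<in>A. \<forall>y\<in>A. {x, y} \<in> EA \<longleftrightarrow> {(g\<circ>f) x, (g\<circ>f) y} \<in> EC"
    using f g by (auto simp: bij_betw_def)
  ultimately show ?thesis unfolding graph_iso_def by blast
qed

lemma iso_class_eq:
  assumes "graph_iso V E W F" shows "iso_class V E = iso_class W F"
proof -
  have c: "card V = card W" using assms unfolding graph_iso_def by (auto intro: bij_betw_same_card)
  have e: "\<And>W' F'. graph_iso V E W' F' \<longleftrightarrow> graph_iso W F W' F'"
    using graph_iso_trans[OF graph_iso_sym[OF assms]] graph_iso_trans[OF assms] by blast
  show ?thesis unfolding iso_class_def c by (simp add: e)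
qed

lemma iso_class_image:
  assumes f: "bij_betw f V W" "\<forall>x\<in>V. \<forall>y\<in>V. {x, y} \<in> E \<longleftrightarrow> {f x, f y} \<in> F"
    and S: "S \<subseteq> V"
  shows "iso_class S (induced E S) = iso_class (f ` S) (induced F (f ` S))"
proof (rule iso_class_eq)
  have "bij_betw f S (f ` S)" using f(1) S by (meson bij_betw_def bij_betw_subset)
  moreover have "\<forall>x\<in>S. \<forall>y\<in>S. {x, y} \<in> induced E S \<longleftrightarrow> {f x, f y} \<in> induced F (f ` S)"
    using f(2) S unfolding induced_def by auto
  ultimately show "graph_iso S (induced E S) (f ` S) (induced F (f ` S))"
    unfolding graph_iso_def by blast
qed

lemma deck_iso:
  assumes "graph_iso V E W F"
  shows "deck k V E = deck k W F"
proof -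
  obtain f where f: "bij_betw f V W" "\<forall>x\<in>V. \<forall>y\<in>V. {x, y} \<in> E \<longleftrightarrow> {f x, f y} \<in> F"
    using assms unfolding graph_iso_def by blast
  let ?K = "{S. S \<subseteq> V \<and> card S = k}"
  let ?K' = "{S. S \<subseteq> W \<and> card S = k}"
  have fi: "inj_on f V" using f(1) by (simp add: bij_betw_def)
  have inj: "inj_on ((`) f) ?K"
  proof (rule inj_onI)
    fix S T assume "S \<in> ?K" "T \<in> ?K" "f ` S = f ` T"
    then show "S = T" using inj_on_image_eq_iff[OF fi] by blast
  qed
  have img: "(`) f ` ?K = ?K'"
  proof
    show "(`) f ` ?K \<subseteq> ?K'"
    proof
      fix T assume "T \<in> (`) f ` ?K"
      then obtain S where S: "S \<subseteq> V" "card S = k" "T = f ` S" by blast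
      have "card T = k" using S card_image[OF inj_on_subset[OF fi S(1)]] by simp
      moreover have "T \<subseteq> W" using S f(1) by (auto simp: bij_betw_def)
      ultimately show "T \<in> ?K'" by blast
    qed
  next
    show "?K' \<subseteq> (`) f ` ?K"
    proof
      fix T assume T: "T \<in> ?K'"
      let ?S = "inv_into V f ` T"
      have "?S \<subseteq> V" using T f(1) by (auto simp: bij_betw_def inv_into_into)
      moreover have "f ` ?S = T" using T f(1)
        by (simp add: bij_betw_def image_inv_into_cancel)
      moreover have "card ?S = k"
        using T card_image[OF inj_on_subset[OF fi \<open>?S \<subseteq> V\<close>]] \<open>f ` ?S = T\<close> by simp
      ultimately show "T \<in> (`) f ` ?K" by blast
    qed
  qed
  have "deck k V E = image_mset (\<lambda>S. iso_class (f ` S) (induced F (f ` S))) (mset_set ?K)"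
    unfolding deck_def
    by (rule image_mset_mset_set_cong) (use iso_class_image[OF f] in auto)
  also have "\<dots> = image_mset (\<lambda>T. iso_class T (induced F T)) (image_mset ((`) f) (mset_set ?K))"
    by (simp add: image_mset.compositionality o_def)
  also have "image_mset ((`) f) (mset_set ?K) = mset_set ?K'"
    using image_mset_mset_set[OF inj] img by simp
  finally show ?thesis unfolding deck_def .
qed

lemma graph_iso_card_edges:
  assumes "graph V E" "graph W F" "graph_iso V E W F"
  shows "card E = card F"
proof -
  obtain f where f: "bij_betw f V W" "\<forall>x\<in>V. \<forall>y\<in>V. {x, y} \<in> E \<longleftrightarrow> {f x, f y} \<in> F"
    using assms unfolding graph_iso_def by blast
  have "bij_betw ((`) f) E F"
    unfolding bij_betw_def
  proof
    have fi: "inj_on f V" using f(1) by (simp add: bij_betw_def)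
    show "inj_on ((`) f) E"
    proof (rule inj_onI)
      fix S T assume "S \<in> E" "T \<in> E" "f ` S = f ` T"
      moreover have "S \<subseteq> V" "T \<subseteq> V" using \<open>S \<in> E\<close> \<open>T \<in> E\<close> assms(1) by (auto simp: graph_def)
      ultimately show "S = T" using inj_on_image_eq_iff[OF fi] by blast
    qed
    show "(`) f ` E = F"
    proof
      show "(`) f ` E \<subseteq> F"
      proof
        fix e' assume "e' \<in> (`) f ` E"
        then obtain e where e: "e \<in> E" "e' = f ` e" by blast
        then have "e \<subseteq> V" "card e = 2" using assms(1) by (auto simp: graph_def)
        then obtain x y where "e = {x, y}" "x \<in> V" "y \<in> V" by (auto simp: card_2_iff)
        then show "e' \<in> F" using e f(2) by auto
      qed
    next
      show "F \<subseteq> (`) f ` E"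
      proof
        fix e' assume e': "e' \<in> F"
        then have "e' \<subseteq> W" "card e' = 2" using assms(2) by (auto simp: graph_def)
        then obtain u v where uv: "e' = {u, v}" "u \<in> W" "v \<in> W" by (auto simp: card_2_iff)
        obtain x where x: "x \<in> V" "f x = u" using uv f(1) by (auto simp: bij_betw_def)
        obtain y where y: "y \<in> V" "f y = v" using uv f(1) by (auto simp: bij_betw_def)
        have "{x, y} \<in> E" using f(2) x y uv e' by auto
        moreover have "e' = f ` {x, y}" using uv x y by auto
        ultimately show "e' \<in> (`) f ` E" by blast
      qed
    qed
  qed
  then show ?thesis by (rule bij_betw_same_card)
qed

definition CE :: "nat \<Rightarrow> nat set \<Rightarrow> nat set set" where
  "CE n Z = {{i, Suc i} | i. Suc i < n \<and> Suc i \<notin> Z}"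

lemma CE_mem: "{x, y} \<in> CE n Z \<longleftrightarrow>
   (y = Suc x \<and> Suc x < n \<and> Suc x \<notin> Z) \<or> (x = Suc y \<and> Suc y < n \<and> Suc y \<notin> Z)"
  unfolding CE_def by (auto simp: doubleton_eq_iff)

lemma graph_CE: "graph {0..<n} (CE n Z)"
  unfolding graph_def CE_def by auto

definition sep :: "nat \<Rightarrow> nat \<Rightarrow> nat set \<Rightarrow> bool" where
  "sep d n Z \<longleftrightarrow> Z \<subseteq> {1..<n} \<and>
     (\<forall>z\<in>insert 0 (insert n Z). \<forall>z'\<in>insert 0 (insert n Z). z < z' \<longrightarrow> z + d \<le> z')"

definition rf :: "nat \<Rightarrow> nat \<Rightarrow> nat \<Rightarrow> nat" where
  "rf p r x = (if p < x + r \<and> x < p + r then 2 * p - x else x)"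

lemma rf_rf: "r \<le> Suc p \<Longrightarrow> rf p r (rf p r x) = x"
  unfolding rf_def by auto

lemma rf_inj: "r \<le> Suc p \<Longrightarrow> inj (rf p r)"
  by (rule injI) (metis rf_rf)

lemma rf_mem: assumes "r \<le> Suc p" shows "x \<in> rf p r ` T \<longleftrightarrow> rf p r x \<in> T"
proof
  assume "x \<in> rf p r ` T"
  then obtain y where "y \<in> T" "x = rf p r y" by blast
  then show "rf p r x \<in> T" using rf_rf[OF assms] by simp
next
  assume "rf p r x \<in> T"
  then have "rf p r (rf p r x) \<in> rf p r ` T" by blast
  then show "x \<in> rf p r ` T" using rf_rf[OF assms] by simp
qed

definition free :: "nat \<Rightarrow> nat set \<Rightarrow> nat \<Rightarrow> bool" where
  "free p T s \<longleftrightarrow> (s \<le> p \<longrightarrow> p - s \<notin> T) \<and> p + s \<notin> T"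

definition rad :: "nat \<Rightarrow> nat set \<Rightarrow> nat" where
  "rad p T = (LEAST s. 0 < s \<and> free p T s)"

lemma pigeon:
  assumes "finite T" "p \<in> T" "card T \<le> Suc d"
  shows "\<exists>s. 0 < s \<and> s \<le> Suc d \<and> free p T s"
proof (rule ccontr)
  assume "\<not> ?thesis"
  then have nf: "\<And>s. 0 < s \<Longrightarrow> s \<le> Suc d \<Longrightarrow> \<not> free p T s" by blast
  define h where "h s = (if s \<le> p \<and> p - s \<in> T then p - s else p + s)" for s
  have "inj_on h {1..Suc d}"
    unfolding inj_on_def h_def by auto
  moreover have "h ` {1..Suc d} \<subseteq> T - {p}"
  proof
    fix x assume "x \<in> h ` {1..Suc d}"
    then obtain s where s: "s \<in> {1..Suc d}" "x = h s" by blast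
    then have "\<not> free p T s" using nf by auto
    then show "x \<in> T - {p}" using s unfolding h_def free_def by auto
  qed
  ultimately have "card {1..Suc d} \<le> card (T - {p})"
    using assms(1) by (intro card_inj_on_le) auto
  then show False using assms by simp
qed

lemma rad_props:
  assumes "finite T" "p \<in> T" "card T \<le> Suc d"
  shows "0 < rad p T" "rad p T \<le> Suc d" "free p T (rad p T)"
    "\<And>s. 0 < s \<Longrightarrow> s < rad p T \<Longrightarrow> \<not> free p T s"
proof -
  obtain s where s: "0 < s" "s \<le> Suc d" "free p T s" using pigeon[OF assms] by blast
  have 1: "0 < rad p T \<and> free p T (rad p T)"
    unfolding rad_def by (rule LeastI[of _ s]) (use s in auto)
  have 2: "rad p T \<le> s" unfolding rad_def by (rule Least_le) (use s in auto)
  show "0 < rad p T" "free p T (rad p T)" using 1 by auto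
  show "rad p T \<le> Suc d" using 2 s by simp
  show "\<And>s. 0 < s \<Longrightarrow> s < rad p T \<Longrightarrow> \<not> free p T s"
    unfolding rad_def using not_less_Least by blast
qed

locale mv =
  fixes d k n p :: nat and Y :: "nat set"
  assumes d1: "1 \<le> d" and kd: "k \<le> Suc d"
  and s1: "sep d n (insert p Y)" and s2: "sep d n (insert (Suc p) Y)"
  and pY: "p \<notin> Y" and SpY: "Suc p \<notin> Y"
begin

lemma pd: "d \<le> p" and pn: "Suc p + d \<le> n"
  using s1 s2 unfolding sep_def by auto

lemma Yfar: "y \<in> Y \<Longrightarrow> y + d \<le> p \<or> Suc p + d \<le> y"
proof -
  assume y: "y \<in> Y"
  then have "y \<noteq> p" "y \<noteq> Suc p" using pY SpY by auto
  then show ?thesis using s1 s2 y unfolding sep_def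
    by (metis insert_iff linorder_neqE_nat not_less_eq)
qed

lemma Ynear: "p < v + d \<Longrightarrow> v \<le> p + d \<Longrightarrow> v \<notin> Y"
  using Yfar by fastforce

definition KK :: "nat set set" where "KK = {T. T \<subseteq> {0..<n} \<and> card T = k}"

definition Phi :: "nat set \<Rightarrow> nat set" where
  "Phi T = (if p \<in> T then rf p (rad p T) ` T else T)"

lemma KK_props: assumes "T \<in> KK" shows "finite T" "card T \<le> Suc d" "T \<subseteq> {0..<n}"
  using assms kd unfolding KK_def by (auto intro: finite_subset)

lemma free_rf:
  assumes r: "0 < r" "r \<le> Suc p" and s: "0 < s" "s \<le> r"
    and fr: "free p T r"
  shows "free p (rf p r ` T) s \<longleftrightarrow> free p T s"
proof (cases "s = r")
  case True
  have "rf p r (p + r) = p + r" unfolding rf_def by auto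
  moreover have "r \<le> p \<Longrightarrow> rf p r (p - r) = p - r" unfolding rf_def by auto
  ultimately show ?thesis using True rf_mem[OF r(2)] unfolding free_def by metis
next
  case False
  then have sr: "s < r" using s by simp
  have a: "rf p r (p + s) = p - s" unfolding rf_def using sr by auto
  have b: "rf p r (p - s) = p + s" unfolding rf_def using sr r by auto
  have sp: "s \<le> p" using sr r by simp
  show ?thesis unfolding free_def using a b sp rf_mem[OF r(2)] by metis
qed

lemma rad_rf:
  assumes T: "T \<in> KK" "p \<in> T"
  shows "rad p (rf p (rad p T) ` T) = rad p T"
proof -
  note rp = rad_props[OF KK_props(1)[OF T(1)] T(2) KK_props(2)[OF T(1)]]
  let ?r = "rad p T"
  have r: "0 < ?r" "?r \<le> Suc p" using rp pd by auto
  show ?thesis unfolding rad_def[of p "rf p ?r ` T"]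
  proof (rule Least_equality)
    show "0 < ?r \<and> free p (rf p ?r ` T) ?r"
      using free_rf[OF r _ _ rp(3), of ?r] r rp(3) by simp
  next
    fix s assume s: "0 < s \<and> free p (rf p ?r ` T) s"
    show "?r \<le> s"
    proof (rule ccontr)
      assume "\<not> ?r \<le> s"
      then have "s < ?r" by simp
      then have "free p T s" using free_rf[OF r _ _ rp(3), of s] s by simp
      then show False using rp(4)[of s] s \<open>s < ?r\<close> by simp
    qed
  qed
qed

lemma Phi_phi: assumes "T \<in> KK" shows "Phi (Phi T) = T"
proof (cases "p \<in> T")
  case True
  note rp = rad_props[OF KK_props(1)[OF assms] True KK_props(2)[OF assms]]
  have r: "rad p T \<le> Suc p" using rp pd by auto
  have "rf p (rad p T) p = p" unfolding rf_def by simp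
  moreover have "rf p (rad p T) p \<in> rf p (rad p T) ` T" using True by blast
  ultimately have pin: "p \<in> rf p (rad p T) ` T" by simp
  have "Phi (Phi T) = rf p (rad p T) ` rf p (rad p T) ` T"
    using True pin rad_rf[OF assms True] unfolding Phi_def by simp
  also have "\<dots> = T" using rf_rf[OF r] by (simp add: image_comp)
  finally show ?thesis .
qed (simp add: Phi_def)

lemma Phi_KK: assumes "T \<in> KK" shows "Phi T \<in> KK"
proof (cases "p \<in> T")
  case True
  note rp = rad_props[OF KK_props(1)[OF assms] True KK_props(2)[OF assms]]
  let ?r = "rad p T"
  have r: "?r \<le> Suc p" using rp pd by auto
  have "card (rf p ?r ` T) = card T"
    using rf_inj[OF r] by (simp add: card_image inj_on_subset)
  moreover have "rf p ?r ` T \<subseteq> {0..<n}"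
  proof
    fix y assume "y \<in> rf p ?r ` T"
    then obtain x where x: "x \<in> T" "y = rf p ?r x" by blast
    have "x < n" using x KK_props(3)[OF assms] by auto
    then show "y \<in> {0..<n}" using x pn rp(2) unfolding rf_def by auto
  qed
  ultimately show ?thesis using assms True unfolding Phi_def KK_def by auto
qed (simp add: Phi_def assms)

lemma CE1_local:
  assumes "p < x + Suc d" "x < p + Suc d" "p < y + Suc d" "y < p + Suc d"
  shows "{x, y} \<in> CE n (insert p Y) \<longleftrightarrow> (y = Suc x \<and> Suc x \<noteq> p) \<or> (x = Suc y \<and> Suc y \<noteq> p)"
  using assms pn Ynear[of "Suc x"] Ynear[of "Suc y"] unfolding CE_mem by auto

lemma CE2_local:
  assumes "p < x + Suc d" "x < p + Suc d" "p < y + Suc d" "y < p + Suc d"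
  shows "{x, y} \<in> CE n (insert (Suc p) Y) \<longleftrightarrow> (y = Suc x \<and> Suc x \<noteq> Suc p) \<or> (x = Suc y \<and> Suc y \<noteq> Suc p)"
  using assms pn Ynear[of "Suc x"] Ynear[of "Suc y"] unfolding CE_mem by auto

lemma edge_rf:
  assumes T: "T \<in> KK" "p \<in> T" and xy: "x \<in> T" "y \<in> T"
  shows "{x, y} \<in> CE n (insert p Y) \<longleftrightarrow> {rf p (rad p T) x, rf p (rad p T) y} \<in> CE n (insert (Suc p) Y)"
proof -
  note rp = rad_props[OF KK_props(1)[OF T(1)] T(2) KK_props(2)[OF T(1)]]
  define r where "r = rad p T"
  have r: "0 < r" "r \<le> Suc d" "free p T r" using rp unfolding r_def by auto
  have A: "\<And>z. z \<in> T \<Longrightarrow> (p < z + r \<and> z < p + r) \<or> z + r < p \<or> p + r < z"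
  proof -
    fix z assume z: "z \<in> T"
    show "(p < z + r \<and> z < p + r) \<or> z + r < p \<or> p + r < z"
    proof (rule ccontr)
      assume "\<not> ?thesis"
      then have "z = p - r \<and> r \<le> p \<or> z = p + r" by auto
      then show False using r(3) z unfolding free_def by auto
    qed
  qed
  have xn: "x < n" "y < n" using xy KK_props(3)[OF T(1)] by auto
  show ?thesis
  proof (cases "p < x + r \<and> x < p + r")
    case xin: True
    have rx: "rf p r x = 2 * p - x" using xin unfolding rf_def by simp
    show ?thesis
    proof (cases "p < y + r \<and> y < p + r")
      case yin: True
      have ry: "rf p r y = 2 * p - y" using yin unfolding rf_def by simp
      have "{x, y} \<in> CE n (insert p Y) \<longleftrightarrow> (y = Suc x \<and> Suc x \<noteq> p) \<or> (x = Suc y \<and> Suc y \<noteq> p)"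
        by (rule CE1_local) (use xin yin r in auto)
      moreover have "{2 * p - x, 2 * p - y} \<in> CE n (insert (Suc p) Y) \<longleftrightarrow>
         (2 * p - y = Suc (2 * p - x) \<and> Suc (2 * p - x) \<noteq> Suc p) \<or> (2 * p - x = Suc (2 * p - y) \<and> Suc (2 * p - y) \<noteq> Suc p)"
        by (rule CE2_local) (use xin yin r pd in auto)
      moreover have "((y = Suc x \<and> Suc x \<noteq> p) \<or> (x = Suc y \<and> Suc y \<noteq> p)) \<longleftrightarrow>
         ((2 * p - y = Suc (2 * p - x) \<and> Suc (2 * p - x) \<noteq> Suc p) \<or> (2 * p - x = Suc (2 * p - y) \<and> Suc (2 * p - y) \<noteq> Suc p))"
        using xin yin r pd by auto
      ultimately show ?thesis using rx ry unfolding r_def by simp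
    next
      case yout: False
      have ry: "rf p r y = y" unfolding rf_def by (rule if_not_P[OF yout])
      have y2: "y + r < p \<or> p + r < y" using A[OF xy(2)] yout by auto
      have "{x, y} \<notin> CE n (insert p Y)" using xin y2 unfolding CE_mem by auto
      moreover have "{2 * p - x, y} \<notin> CE n (insert (Suc p) Y)" using xin y2 unfolding CE_mem by auto
      ultimately show ?thesis using rx ry unfolding r_def by simp
    qed
  next
    case xout: False
    have rx: "rf p r x = x" unfolding rf_def by (rule if_not_P[OF xout])
    have x2: "x + r < p \<or> p + r < x" using A[OF xy(1)] xout by auto
    show ?thesis
    proof (cases "p < y + r \<and> y < p + r")
      case yin: True
      have ry: "rf p r y = 2 * p - y" using yin unfolding rf_def by simp
      have "{x, y} \<notin> CE n (insert p Y)" using yin x2 unfolding CE_mem by auto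
      moreover have "{x, 2 * p - y} \<notin> CE n (insert (Suc p) Y)" using yin x2 unfolding CE_mem by auto
      ultimately show ?thesis using rx ry unfolding r_def by simp
    next
      case yout: False
      have ry: "rf p r y = y" unfolding rf_def by (rule if_not_P[OF yout])
      have y2: "y + r < p \<or> p + r < y" using A[OF xy(2)] yout by auto
      have "{x, y} \<in> CE n (insert p Y) \<longleftrightarrow> {x, y} \<in> CE n (insert (Suc p) Y)"
        using x2 y2 r unfolding CE_mem by auto
      then show ?thesis using rx ry unfolding r_def by simp
    qed
  qed
qed

lemma Phi_iso:
  assumes T: "T \<in> KK"
  shows "iso_class T (induced (CE n (insert p Y)) T) = iso_class (Phi T) (induced (CE n (insert (Suc p) Y)) (Phi T))"
proof (cases "p \<in> T")
  case True
  note rp = rad_props[OF KK_props(1)[OF T] True KK_props(2)[OF T]]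
  let ?f = "rf p (rad p T)"
  have r: "rad p T \<le> Suc p" using rp pd by auto
  show ?thesis
  proof (rule iso_class_eq)
    have "bij_betw ?f T (?f ` T)" using inj_on_subset[OF rf_inj[OF r] subset_UNIV] by (simp add: bij_betw_def)
    moreover have "\<forall>x\<in>T. \<forall>y\<in>T. {x, y} \<in> induced (CE n (insert p Y)) T \<longleftrightarrow>
        {?f x, ?f y} \<in> induced (CE n (insert (Suc p) Y)) (?f ` T)"
      using edge_rf[OF T True] unfolding induced_def by auto
    ultimately show "graph_iso T (induced (CE n (insert p Y)) T) (Phi T) (induced (CE n (insert (Suc p) Y)) (Phi T))"
      unfolding graph_iso_def Phi_def using True by auto
  qed
next
  case False
  have "induced (CE n (insert p Y)) T = induced (CE n (insert (Suc p) Y)) T"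
    using False unfolding induced_def CE_def by auto
  then show ?thesis using False unfolding Phi_def by simp
qed

lemma deck_move:
  "deck k {0..<n} (CE n (insert p Y)) = deck k {0..<n} (CE n (insert (Suc p) Y))"
proof -
  have K: "{S. S \<subseteq> {0..<n} \<and> card S = k} = KK" unfolding KK_def by simp
  have inj: "inj_on Phi KK" by (metis Phi_phi inj_onI)
  have img: "Phi ` KK = KK"
  proof
    show "Phi ` KK \<subseteq> KK" using Phi_KK by auto
    show "KK \<subseteq> Phi ` KK"
    proof
      fix T assume "T \<in> KK"
      then have "T = Phi (Phi T)" "Phi T \<in> KK" using Phi_phi Phi_KK by auto
      then show "T \<in> Phi ` KK" by blast
    qed
  qed
  have "deck k {0..<n} (CE n (insert p Y)) =
     image_mset (\<lambda>T. iso_class (Phi T) (induced (CE n (insert (Suc p) Y)) (Phi T))) (mset_set KK)"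
    unfolding deck_def K by (rule image_mset_mset_set_cong) (rule Phi_iso)
  also have "\<dots> = image_mset (\<lambda>T. iso_class T (induced (CE n (insert (Suc p) Y)) T)) (image_mset Phi (mset_set KK))"
    by (simp add: image_mset.compositionality o_def)
  also have "image_mset Phi (mset_set KK) = mset_set KK"
    using image_mset_mset_set[OF inj] img by simp
  finally show ?thesis unfolding deck_def K .
qed

end

definition zm :: "nat \<Rightarrow> nat \<Rightarrow> nat set" where "zm d c = (\<lambda>i. d * i) ` {1..c}"

lemma normal_dvd:
  assumes d: "1 \<le> d" and s: "sep d n Z" and N: "\<forall>z\<in>Z. z - d \<in> insert 0 Z"
  shows "z \<in> Z \<Longrightarrow> d dvd z"
proof (induction z rule: less_induct)
  case (less z)
  have zpos: "0 < z" using less.prems s unfolding sep_def by auto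
  then have zd: "d \<le> z" using less.prems s unfolding sep_def by force
  show ?case
  proof (cases "z - d = 0")
    case True then have "z = d" using zd by simp
    then show ?thesis by simp
  next
    case False
    then have "z - d \<in> Z" using N less.prems by auto
    moreover have "z - d < z" using False d by simp
    ultimately have "d dvd (z - d)" using less.IH by blast
    then have "d dvd (z - d) + d" by simp
    then show ?thesis using zd by simp
  qed
qed

lemma normal_zm:
  assumes d: "1 \<le> d" and s: "sep d n Z" and N: "\<forall>z\<in>Z. z - d \<in> insert 0 Z"
  shows "Z = zm d (card Z)"
proof -
  define I where "I = {i. d * i \<in> Z}"
  have Zsub: "Z \<subseteq> {1..<n}" using s unfolding sep_def by simp
  have ZI: "Z = (\<lambda>i. d * i) ` I"
  proof
    show "Z \<subseteq> (\<lambda>i. d * i) ` I"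
    proof
      fix z assume z: "z \<in> Z"
      then obtain i where "z = d * i" using normal_dvd[OF assms z] by (auto elim: dvdE)
      then show "z \<in> (\<lambda>i. d * i) ` I" using z unfolding I_def by blast
    qed
  qed (auto simp: I_def)
  have inj: "inj_on (\<lambda>i. d * i) I" using d by (auto simp: inj_on_def)
  have I0: "0 \<notin> I" using Zsub unfolding I_def by auto
  have Ifin: "finite I"
  proof (rule finite_subset)
    show "I \<subseteq> {..n}"
    proof
      fix i assume "i \<in> I"
      then have "d * i < n" using Zsub unfolding I_def by auto
      moreover have "i \<le> d * i" using d by simp
      ultimately show "i \<in> {..n}" by (simp only: atMost_iff)
    qed
  qed simp
  have down: "\<And>i. i \<in> I \<Longrightarrow> 2 \<le> i \<Longrightarrow> i - 1 \<in> I"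
  proof -
    fix i assume i: "i \<in> I" "2 \<le> i"
    then have "d * i - d \<in> insert 0 Z" using N unfolding I_def by auto
    moreover have "d * i - d = d * (i - 1)" by (simp add: right_diff_distrib')
    moreover have "d * (i - 1) \<noteq> 0" using d i by simp
    ultimately show "i - 1 \<in> I" unfolding I_def by simp
  qed
  define m where "m = (if I = {} then 0 else Max I)"
  have Ieq: "I = {1..m}"
  proof (cases "I = {}")
    case True then show ?thesis unfolding m_def by simp
  next
    case False
    have mI: "m \<in> I" using False Ifin unfolding m_def by simp
    have low: "\<And>t. t < m \<Longrightarrow> m - t \<in> I"
    proof -
      fix t show "t < m \<Longrightarrow> m - t \<in> I"
      proof (induction t)
        case 0 then show ?case using mI by simp
      next
        case (Suc t)
        then have "m - t \<in> I" "2 \<le> m - t" by auto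
        then have "m - t - 1 \<in> I" by (rule down)
        then show ?case by simp
      qed
    qed
    show ?thesis
    proof
      show "I \<subseteq> {1..m}"
      proof
        fix i assume i: "i \<in> I"
        have "i \<noteq> 0"
        proof
          assume "i = 0" with i I0 show False by simp
        qed
        moreover have "i \<le> m" using i Ifin False unfolding m_def by simp
        ultimately show "i \<in> {1..m}" by simp
      qed
      show "{1..m} \<subseteq> I"
      proof
        fix i assume "i \<in> {1..m}"
        then have "m - (m - i) = i" "m - i < m" by auto
        then show "i \<in> I" using low[of "m - i"] by simp
      qed
    qed
  qed
  have "card Z = m" using ZI Ieq card_image[OF inj] by simp
  then show ?thesis unfolding zm_def using ZI Ieq by simp
qed

lemma move_step:
  assumes d: "1 \<le> d" and s: "sep d n Z" and z: "z \<in> Z" "z - d \<notin> insert 0 Z"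
  shows "sep d n (insert (z - 1) (Z - {z}))" "z - 1 \<notin> Z - {z}" "Suc (z - 1) \<notin> Z - {z}"
    "Z = insert (Suc (z - 1)) (Z - {z})" "card (insert (z - 1) (Z - {z})) = card Z"
    "sum id (insert (z - 1) (Z - {z})) < sum id Z"
proof -
  have Zsub: "Z \<subseteq> {1..<n}" using s unfolding sep_def by simp
  have fin: "finite Z" using Zsub by (rule finite_subset) simp
  have S: "\<And>a b. a \<in> insert 0 (insert n Z) \<Longrightarrow> b \<in> insert 0 (insert n Z) \<Longrightarrow> a < b \<Longrightarrow> a + d \<le> b"
    using s unfolding sep_def by blast
  have zn: "1 \<le> z" "z < n" using z Zsub by auto
  have zd: "d \<le> z" using S[of 0 z] z zn by simp
  have zd2: "d < z" using zd z(2) by (cases "z = d") auto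
  have below: "\<And>w. w \<in> insert 0 (insert n Z) \<Longrightarrow> w < z \<Longrightarrow> w + d \<le> z - 1"
  proof -
    fix w assume w: "w \<in> insert 0 (insert n Z)" "w < z"
    then have "w + d \<le> z" using S[of w z] z by simp
    moreover have "w \<noteq> z - d" using w z(2) zn by auto
    ultimately show "w + d \<le> z - 1" by simp
  qed
  have above: "\<And>w. w \<in> insert 0 (insert n Z) \<Longrightarrow> z < w \<Longrightarrow> z + d \<le> w"
    using S z by simp
  show nz: "z - 1 \<notin> Z - {z}"
  proof
    assume "z - 1 \<in> Z - {z}"
    then have "z - 1 + d \<le> z - 1" using below[of "z - 1"] zn by simp
    then show False using d by simp
  qed
  show "Suc (z - 1) \<notin> Z - {z}" using zn by simp
  show "Z = insert (Suc (z - 1)) (Z - {z})" using zn z by auto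
  show "card (insert (z - 1) (Z - {z})) = card Z"
  proof -
    have "card Z > 0" using fin z card_gt_0_iff by blast
    then show ?thesis using nz fin z by (simp add: card_Diff_singleton)
  qed
  show "sum id (insert (z - 1) (Z - {z})) < sum id Z"
  proof -
    have "sum id (insert (z - 1) (Z - {z})) = (z - 1) + sum id (Z - {z})"
      using nz fin by simp
    moreover have "sum id Z = z + sum id (Z - {z})"
      using fin z by (simp add: sum.remove)
    ultimately show ?thesis using zn by simp
  qed
  show "sep d n (insert (z - 1) (Z - {z}))"
    unfolding sep_def
  proof (intro conjI ballI impI)
    show "insert (z - 1) (Z - {z}) \<subseteq> {1..<n}" using Zsub zd2 d zn by auto
  next
    fix a b assume a: "a \<in> insert 0 (insert n (insert (z - 1) (Z - {z})))"
      and b: "b \<in> insert 0 (insert n (insert (z - 1) (Z - {z})))" and ab: "a < b"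
    show "a + d \<le> b"
    proof (cases "a = z - 1")
      case True
      then have "b \<in> insert 0 (insert n Z)" "b \<noteq> z" using b ab zn by auto
      then have "z + d \<le> b" using above[of b] ab True zn
        by (metis One_nat_def Suc_pred less_Suc_eq le_less zn(1) not_less_eq)
      then show ?thesis using True by simp
    next
      case False
      then have a': "a \<in> insert 0 (insert n Z)" using a by auto
      show ?thesis
      proof (cases "b = z - 1")
        case True
        then show ?thesis using below[OF a'] ab zn by simp
      next
        case False
        then have "b \<in> insert 0 (insert n Z)" using b by auto
        then show ?thesis using S[OF a'] ab by simp
      qed
    qed
  qed
qed

lemma deck_zm:
  assumes d: "1 \<le> d" "k \<le> Suc d"
  shows "sep d n Z \<Longrightarrow> deck k {0..<n} (CE n Z) = deck k {0..<n} (CE n (zm d (card Z)))"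
proof (induction "sum id Z" arbitrary: Z rule: less_induct)
  case (less Z)
  show ?case
  proof (cases "\<forall>z\<in>Z. z - d \<in> insert 0 Z")
    case True
    then have "Z = zm d (card Z)" using normal_zm[OF d(1) less.prems] by simp
    then show ?thesis by simp
  next
    case False
    then obtain z where z: "z \<in> Z" "z - d \<notin> insert 0 Z" by blast
    note ms = move_step[OF d(1) less.prems z]
    let ?Y = "Z - {z}" and ?p = "z - 1"
    have sZ: "sep d n (insert (Suc ?p) ?Y)" using ms(4) less.prems by simp
    interpret mv d k n ?p ?Y using d ms(1-3) sZ by unfold_locales auto
    have "deck k {0..<n} (CE n Z) = deck k {0..<n} (CE n (insert ?p ?Y))"
      using deck_move ms(4) by simp
    also have "\<dots> = deck k {0..<n} (CE n (zm d (card (insert ?p ?Y))))"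
      using less.hyps[OF ms(6) ms(1)] .
    finally show ?thesis using ms(5) by simp
  qed
qed

lemma deck_sep_eq:
  assumes "1 \<le> d" "k \<le> Suc d" "sep d n Z" "sep d n Z'" "card Z = card Z'"
  shows "deck k {0..<n} (CE n Z) = deck k {0..<n} (CE n Z')"
  using deck_zm[OF assms(1,2) assms(3)] deck_zm[OF assms(1,2) assms(4)] assms(5) by simp

lemma adj_sym: "adj E x y \<longleftrightarrow> adj E y x"
  unfolding adj_def by (simp add: insert_commute)

lemma reach_sym: "(adj E)\<^sup>*\<^sup>* x y \<Longrightarrow> (adj E)\<^sup>*\<^sup>* y x"
proof (induction rule: rtranclp_induct)
  case base then show ?case by simp
next
  case (step y z)
  then have "adj E z y" using adj_sym by metis
  then show ?case using step.IH by (rule converse_rtranclp_into_rtranclp)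
qed

lemma comp_self: "x \<in> V \<Longrightarrow> x \<in> component V E x"
  unfolding component_def by simp

lemma comp_sub: "component V E x \<subseteq> V"
  unfolding component_def by auto

lemma edge_split:
  assumes g: "graph V E" and e: "e \<in> E"
  shows "e \<subseteq> component V E x \<or> e \<subseteq> V - component V E x"
proof -
  have "e \<subseteq> V" "card e = 2" using g e unfolding graph_def by auto
  then obtain u v where uv: "e = {u, v}" "u \<in> V" "v \<in> V" by (auto simp: card_2_iff)
  have a1: "adj E u v" "adj E v u" using uv e unfolding adj_def by (auto simp: insert_commute)
  have "u \<in> component V E x \<longleftrightarrow> v \<in> component V E x"
    using a1 uv unfolding component_def
    by (auto intro: rtranclp.rtrancl_into_rtrancl)
  then show ?thesis using uv by auto
qed

lemma reach_restrict:
  assumes g: "graph V E" and y: "y \<in> V - component V E x"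
  shows "(adj E)\<^sup>*\<^sup>* y z \<Longrightarrow> z \<in> V - component V E x \<and>
     (adj (induced E (V - component V E x)))\<^sup>*\<^sup>* y z"
proof (induction rule: rtranclp_induct)
  case base then show ?case using y by simp
next
  case (step z w)
  let ?C = "component V E x"
  have e: "{z, w} \<in> E" using step.hyps(2) unfolding adj_def .
  have "{z, w} \<subseteq> V - ?C"
    using edge_split[OF g e, of x] step.IH by auto
  then have "w \<in> V - ?C" "adj (induced E (V - ?C)) z w"
    using e unfolding adj_def induced_def by auto
  then show ?case using step.IH by (auto intro: rtranclp.rtrancl_into_rtrancl)
qed

lemma reach_mono: "(adj (induced E S))\<^sup>*\<^sup>* y z \<Longrightarrow> (adj E)\<^sup>*\<^sup>* y z"
proof -
  have "adj (induced E S) \<le> adj E" unfolding adj_def induced_def by auto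
  then show "(adj (induced E S))\<^sup>*\<^sup>* y z \<Longrightarrow> (adj E)\<^sup>*\<^sup>* y z"
    using rtranclp_mono by (metis predicate2D)
qed

lemma comp_restrict:
  assumes g: "graph V E" and y: "y \<in> V - component V E x"
  shows "component (V - component V E x) (induced E (V - component V E x)) y = component V E y"
proof
  show "component (V - component V E x) (induced E (V - component V E x)) y \<subseteq> component V E y"
    unfolding component_def using reach_mono by fastforce
  show "component V E y \<subseteq> component (V - component V E x) (induced E (V - component V E x)) y"
  proof
    fix z assume "z \<in> component V E y"
    then have "(adj E)\<^sup>*\<^sup>* y z" unfolding component_def by simp
    then have "z \<in> V - component V E x \<and> (adj (induced E (V - component V E x)))\<^sup>*\<^sup>* y z"
      by (rule reach_restrict[OF g y])
    then show "z \<in> component (V - component V E x) (induced E (V - component V E x)) y"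
      unfolding component_def[of "V - component V E x"] by blast
  qed
qed

lemma induced_induced: "C \<subseteq> S \<Longrightarrow> induced (induced E S) C = induced E C"
  unfolding induced_def by auto

lemma lf_restrict:
  assumes lf: "linear_forest V E"
  shows "linear_forest (V - component V E x) (induced E (V - component V E x))"
proof -
  let ?C = "component V E x"
  have g: "graph V E" using lf unfolding linear_forest_def by simp
  have "graph (V - ?C) (induced E (V - ?C))"
    using g unfolding graph_def induced_def by auto
  moreover have "\<forall>y\<in>V - ?C. is_path (component (V - ?C) (induced E (V - ?C)) y)
      (induced (induced E (V - ?C)) (component (V - ?C) (induced E (V - ?C)) y))"
  proof
    fix y assume y: "y \<in> V - ?C"
    have c: "component (V - ?C) (induced E (V - ?C)) y = component V E y"
      by (rule comp_restrict[OF g y])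
    have "component V E y \<subseteq> V - ?C"
      using c comp_sub by metis
    then have "induced (induced E (V - ?C)) (component V E y) = induced E (component V E y)"
      by (rule induced_induced)
    then show "is_path (component (V - ?C) (induced E (V - ?C)) y)
      (induced (induced E (V - ?C)) (component (V - ?C) (induced E (V - ?C)) y))"
      using c lf y unfolding linear_forest_def by auto
  qed
  ultimately show ?thesis unfolding linear_forest_def by blast
qed

lemma path_edge:
  assumes "distinct xs" "i < length xs" "j < length xs"
  shows "{xs ! i, xs ! j} \<in> {{xs ! t, xs ! (t + 1)} | t. t + 1 < length xs} \<longleftrightarrow> j = Suc i \<or> i = Suc j"
proof
  assume "{xs ! i, xs ! j} \<in> {{xs ! t, xs ! (t + 1)} | t. t + 1 < length xs}"
  then obtain t where t: "{xs ! i, xs ! j} = {xs ! t, xs ! (t + 1)}" "t + 1 < length xs" by blast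
  then have "(xs ! i = xs ! t \<and> xs ! j = xs ! (t + 1)) \<or> (xs ! i = xs ! (t + 1) \<and> xs ! j = xs ! t)"
    by (auto simp: doubleton_eq_iff)
  then have "(i = t \<and> j = t + 1) \<or> (i = t + 1 \<and> j = t)"
    using assms t(2) by (auto simp: nth_eq_iff_index_eq)
  then show "j = Suc i \<or> i = Suc j" by auto
next
  assume "j = Suc i \<or> i = Suc j"
  then show "{xs ! i, xs ! j} \<in> {{xs ! t, xs ! (t + 1)} | t. t + 1 < length xs}"
  proof
    assume "j = Suc i" then show ?thesis using assms by auto
  next
    assume "i = Suc j" then show ?thesis using assms by (auto simp: insert_commute)
  qed
qed

lemma decomp:
  assumes d1: "1 \<le> d"
  shows "finite V \<Longrightarrow> linear_forest V E \<Longrightarrow> (\<forall>x\<in>V. d \<le> card (component V E x)) \<Longrightarrow>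
    \<exists>Z. sep d (card V) Z \<and> graph_iso {0..<card V} (CE (card V) Z) V E"
proof (induction "card V" arbitrary: V E rule: less_induct)
  case (less V E)
  show ?case
  proof (cases "V = {}")
    case True
    have "sep d 0 {}" unfolding sep_def by simp
    moreover have "bij_betw (\<lambda>i::nat. undefined) {0..<0::nat} V" using True by (simp add: bij_betw_def)
    then have "graph_iso {0..<0} (CE 0 {}) V E" unfolding graph_iso_def by auto
    ultimately show ?thesis using True by auto
  next
    case False
    then obtain x where x: "x \<in> V" by blast
    define C where "C = component V E x"
    define V' where "V' = V - C"
    define E' where "E' = induced E V'"
    have g: "graph V E" using less.prems(2) unfolding linear_forest_def by simp
    obtain xs where xs: "xs \<noteq> []" "distinct xs" "set xs = C"
        "induced E C = {{xs ! i, xs ! (i + 1)} | i. i + 1 < length xs}"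
      using less.prems(2) x unfolding linear_forest_def is_path_def C_def by blast
    define a where "a = length xs"
    have aC: "card C = a" using distinct_card[OF xs(2)] xs(3) a_def by simp
    have ad: "d \<le> a" using less.prems(3) x aC C_def by auto
    have CV: "C \<subseteq> V" unfolding C_def by (rule comp_sub)
    have finV': "finite V'" using less.prems(1) V'_def by simp
    have cardV: "card V = a + card V'"
      using card_Diff_subset[OF finite_subset[OF CV less.prems(1)] CV] card_mono[OF less.prems(1) CV] aC V'_def
      by simp
    have lt: "card V' < card V" using cardV ad d1 by simp
    have lf': "linear_forest V' E'" unfolding V'_def E'_def C_def by (rule lf_restrict[OF less.prems(2)])
    have comp': "\<forall>y\<in>V'. d \<le> card (component V' E' y)"
    proof
      fix y assume y: "y \<in> V'"
      have "component V' E' y = component V E y"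
        unfolding V'_def E'_def C_def by (rule comp_restrict[OF g]) (use y V'_def C_def in simp)
      then show "d \<le> card (component V' E' y)" using less.prems(3) y V'_def by auto
    qed
    obtain Z' where Z': "sep d (card V') Z'" "graph_iso {0..<card V'} (CE (card V') Z') V' E'"
      using less.hyps[OF lt finV' lf' comp'] by blast
    define n' where "n' = card V'"
    define n where "n = card V"
    have nn: "n = a + n'" using cardV n_def n'_def by simp
    obtain g where gb: "bij_betw g {0..<n'} V'"
      and ge: "\<forall>i\<in>{0..<n'}. \<forall>j\<in>{0..<n'}. {i, j} \<in> CE n' Z' \<longleftrightarrow> {g i, g j} \<in> E'"
      using Z'(2) unfolding graph_iso_def n'_def by blast
    define Z where "Z = (if n' = 0 then {} else insert a ((+) a ` Z'))"
    define f where "f i = (if i < a then xs ! i else g (i - a))" for i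
    have Z'sub: "Z' \<subseteq> {1..<n'}" using Z'(1) unfolding sep_def n'_def by simp
    have Zmem: "\<And>w. w \<in> Z \<longleftrightarrow> 0 < n' \<and> (w = a \<or> (a \<le> w \<and> w - a \<in> Z'))"
      unfolding Z_def by force
    have sepZ: "sep d n Z"
    proof (cases "n' = 0")
      case True
      then show ?thesis unfolding sep_def Z_def using nn ad by auto
    next
      case False
      have S': "\<And>u v. u \<in> insert 0 (insert n' Z') \<Longrightarrow> v \<in> insert 0 (insert n' Z') \<Longrightarrow> u < v \<Longrightarrow> u + d \<le> v"
        using Z'(1) unfolding sep_def n'_def by blast
      have ins: "insert 0 (insert n Z) = insert 0 ((+) a ` insert 0 (insert n' Z'))"
        using False nn unfolding Z_def by auto
      show ?thesis unfolding sep_def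
      proof (intro conjI ballI impI)
        show "Z \<subseteq> {1..<n}" using False nn Z'sub ad d1 unfolding Z_def by auto
      next
        fix u v assume u: "u \<in> insert 0 (insert n Z)" and v: "v \<in> insert 0 (insert n Z)" and uv: "u < v"
        show "u + d \<le> v"
        proof (cases "u = 0")
          case True
          then obtain w where "v = a + w" using v uv ins by auto
          then show ?thesis using True ad by simp
        next
          case False
          then obtain w1 where w1: "u = a + w1" "w1 \<in> insert 0 (insert n' Z')" using u ins by auto
          obtain w2 where w2: "v = a + w2" "w2 \<in> insert 0 (insert n' Z')" using v uv ins by auto
          show ?thesis using S'[OF w1(2) w2(2)] w1 w2 uv by simp
        qed
      qed
    qed
    have b1: "bij_betw f {0..<a} C"
    proof -
      have "bij_betw ((!) xs) {0..<a} C" using bij_betw_nth[OF xs(2)] xs(3) a_def by (simp add: lessThan_atLeast0)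
      then show ?thesis by (rule bij_betw_cong[THEN iffD1, rotated]) (simp add: f_def)
    qed
    have b2: "bij_betw f {a..<n} V'"
    proof -
      have "bij_betw (\<lambda>i. i - a) {a..<n} {0..<n'}"
        unfolding bij_betw_def
      proof
        show "inj_on (\<lambda>i. i - a) {a..<n}" by (rule inj_on_diff_nat) simp
        show "(\<lambda>i. i - a) ` {a..<n} = {0..<n'}"
          using nn by (cases "n' = 0") (auto simp: image_minus_const_atLeastLessThan_nat)
      qed
      then have "bij_betw (g \<circ> (\<lambda>i. i - a)) {a..<n} V'" using gb by (rule bij_betw_trans)
      then show ?thesis by (rule bij_betw_cong[THEN iffD1, rotated]) (simp add: f_def)
    qed
    have bij: "bij_betw f {0..<n} V"
    proof -
      have "bij_betw f ({0..<a} \<union> {a..<n}) (C \<union> V')"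
        by (rule bij_betw_combine[OF b1 b2]) (simp add: V'_def)
      moreover have "{0..<a} \<union> {a..<n} = {0..<n}" using nn by auto
      moreover have "C \<union> V' = V" using CV V'_def by auto
      ultimately show ?thesis by simp
    qed
    have F1: "\<And>u v. u \<in> C \<Longrightarrow> v \<in> C \<Longrightarrow> {u, v} \<in> E \<longleftrightarrow> {u, v} \<in> induced E C"
      unfolding induced_def by auto
    have F2: "\<And>u v. u \<in> V' \<Longrightarrow> v \<in> V' \<Longrightarrow> {u, v} \<in> E \<longleftrightarrow> {u, v} \<in> E'"
      unfolding induced_def E'_def by auto
    have F3: "\<And>u v. u \<in> C \<Longrightarrow> v \<in> V' \<Longrightarrow> {u, v} \<notin> E"
    proof
      fix u v assume uv: "u \<in> C" "v \<in> V'" "{u, v} \<in> E"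
      then show False using edge_split[OF g uv(3), of x] unfolding C_def V'_def by auto
    qed
    have fC: "\<And>i. i < a \<Longrightarrow> f i \<in> C" using b1 unfolding bij_betw_def by auto
    have fV': "\<And>i. a \<le> i \<Longrightarrow> i < n \<Longrightarrow> f i \<in> V'" using b2 unfolding bij_betw_def by auto
    have edges: "\<forall>i\<in>{0..<n}. \<forall>j\<in>{0..<n}. {i, j} \<in> CE n Z \<longleftrightarrow> {f i, f j} \<in> E"
    proof (intro ballI)
      fix i j assume i: "i \<in> {0..<n}" and j: "j \<in> {0..<n}"
      show "{i, j} \<in> CE n Z \<longleftrightarrow> {f i, f j} \<in> E"
      proof (cases "i < a")
        case ia: True
        show ?thesis
        proof (cases "j < a")
          case ja: True
          have "{f i, f j} \<in> E \<longleftrightarrow> {xs ! i, xs ! j} \<in> induced E C"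
            using F1[OF fC[OF ia] fC[OF ja]] ia ja unfolding f_def by simp
          also have "\<dots> \<longleftrightarrow> j = Suc i \<or> i = Suc j"
            unfolding xs(4) by (rule path_edge[OF xs(2)]) (use ia ja a_def in auto)
          also have "\<dots> \<longleftrightarrow> {i, j} \<in> CE n Z"
            unfolding CE_mem Zmem using ia ja nn by auto
          finally show ?thesis by simp
        next
          case ja: False
          have "{f i, f j} \<notin> E" using F3[OF fC[OF ia] fV'] ja j by auto
          moreover have "{i, j} \<notin> CE n Z"
            unfolding CE_mem Zmem using ia ja j nn by auto
          ultimately show ?thesis by simp
        qed
      next
        case ia: False
        show ?thesis
        proof (cases "j < a")
          case ja: True
          have "{f j, f i} \<notin> E" using F3[OF fC[OF ja] fV'] ia i by auto
          then have "{f i, f j} \<notin> E" by (simp add: insert_commute)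
          moreover have "{i, j} \<notin> CE n Z"
            unfolding CE_mem Zmem using ia ja i nn by auto
          ultimately show ?thesis by simp
        next
          case ja: False
          have np: "0 < n'" using i ia nn by simp
          have fi: "f i = g (i - a)" "f j = g (j - a)" using ia ja unfolding f_def by auto
          have "{f i, f j} \<in> E \<longleftrightarrow> {f i, f j} \<in> E'"
            using F2[OF fV' fV'] ia ja i j by auto
          also have "\<dots> \<longleftrightarrow> {i - a, j - a} \<in> CE n' Z'"
            using ge i j ia ja nn fi by auto
          also have "\<dots> \<longleftrightarrow> {i, j} \<in> CE n Z"
          proof -
            have "Suc i - a = Suc (i - a)" "Suc j - a = Suc (j - a)" using ia ja by auto
            then show ?thesis unfolding CE_mem Zmem using ia ja nn np by auto
          qed
          finally show ?thesis by simp
        qed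
      qed
    qed
    have "graph_iso {0..<n} (CE n Z) V E"
      unfolding graph_iso_def using bij edges by blast
    then show ?thesis using sepZ n_def by blast
  qed
qed

lemma card_CE:
  assumes "Z \<subseteq> {1..<n}"
  shows "card (CE n Z) = n - 1 - card Z"
proof -
  let ?A = "{i. Suc i < n \<and> Suc i \<notin> Z}"
  have ce: "CE n Z = (\<lambda>i. {i, Suc i}) ` ?A" unfolding CE_def by auto
  have inj: "inj_on (\<lambda>i. {i, Suc i}) ?A"
    by (rule inj_onI) (auto simp: doubleton_eq_iff)
  have sA: "Suc ` ?A = {1..<n} - Z"
  proof
    show "Suc ` ?A \<subseteq> {1..<n} - Z" by auto
    show "{1..<n} - Z \<subseteq> Suc ` ?A"
    proof
      fix w assume w: "w \<in> {1..<n} - Z"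
      then have "w = Suc (w - 1)" "w - 1 \<in> ?A" by auto
      then show "w \<in> Suc ` ?A" by blast
    qed
  qed
  have "card ?A = card ({1..<n} - Z)"
    using sA card_image[of Suc ?A] by simp
  also have "\<dots> = (n - 1) - card Z"
    using assms by (simp add: card_Diff_subset finite_subset)
  finally show ?thesis using ce card_image[OF inj] by simp
qed

theorem corollary2p5:
  fixes k :: nat and V :: "'a set" and E :: "'a set set" and V' :: "'b set" and E' :: "'b set set"
  assumes "k > 0"
    and "linear_forest V E" and "linear_forest V' E'"
    and "card V = card V'" and "card E = card E'"
    and "\<forall>x\<in>V. card (component V E x) \<ge> k - 1"
    and "\<forall>x\<in>V'. card (component V' E' x) \<ge> k - 1"
  shows "deck k V E = deck k V' E'"
proof -
  define d where "d = max (k - 1) 1"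
  have d1: "1 \<le> d" and kd: "k \<le> Suc d" unfolding d_def by auto
  have gV: "graph V E" and gV': "graph V' E'" using assms(2,3) unfolding linear_forest_def by auto
  have fV: "finite V" and fV': "finite V'" using gV gV' unfolding graph_def by auto
  have cV: "\<forall>x\<in>V. d \<le> card (component V E x)"
  proof
    fix x assume x: "x \<in> V"
    have "x \<in> component V E x" by (rule comp_self[OF x])
    moreover have "finite (component V E x)" using fV comp_sub by (rule finite_subset[rotated])
    ultimately have "1 \<le> card (component V E x)" by (metis One_nat_def Suc_leI card_gt_0_iff empty_iff)
    then show "d \<le> card (component V E x)" using assms(6) x unfolding d_def by auto
  qed
  have cV': "\<forall>x\<in>V'. d \<le> card (component V' E' x)"
  proof
    fix x assume x: "x \<in> V'"
    have "x \<in> component V' E' x" by (rule comp_self[OF x])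
    moreover have "finite (component V' E' x)" using fV' comp_sub by (rule finite_subset[rotated])
    ultimately have "1 \<le> card (component V' E' x)" by (metis One_nat_def Suc_leI card_gt_0_iff empty_iff)
    then show "d \<le> card (component V' E' x)" using assms(7) x unfolding d_def by auto
  qed
  define n where "n = card V"
  obtain Z where Z: "sep d n Z" "graph_iso {0..<n} (CE n Z) V E"
    using decomp[OF d1 fV assms(2) cV] unfolding n_def by blast
  obtain Z' where Z': "sep d n Z'" "graph_iso {0..<n} (CE n Z') V' E'"
    using decomp[OF d1 fV' assms(3) cV'] assms(4) unfolding n_def by auto
  have Zs: "Z \<subseteq> {1..<n}" "Z' \<subseteq> {1..<n}" using Z(1) Z'(1) unfolding sep_def by auto
  have "card E = card (CE n Z)"
    using graph_iso_card_edges[OF graph_CE gV Z(2)] by simp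
  moreover have "card E' = card (CE n Z')"
    using graph_iso_card_edges[OF graph_CE gV' Z'(2)] by simp
  ultimately have "n - 1 - card Z = n - 1 - card Z'"
    using assms(5) card_CE[OF Zs(1)] card_CE[OF Zs(2)] by simp
  moreover have "card Z \<le> n - 1" "card Z' \<le> n - 1"
    using card_mono[OF _ Zs(1)] card_mono[OF _ Zs(2)] by auto
  ultimately have cZ: "card Z = card Z'" by simp
  have "deck k V E = deck k {0..<n} (CE n Z)" using deck_iso[OF Z(2)] by simp
  also have "\<dots> = deck k {0..<n} (CE n Z')" by (rule deck_sep_eq[OF d1 kd Z(1) Z'(1) cZ])
  also have "\<dots> = deck k V' E'" using deck_iso[OF Z'(2)] .
  finally show ?thesis .
qed

end
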